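(* Let $h>0$ and let $\gamma=(\gamma^\tau,\gamma^\omega):[0,1]\to\mathbb{R}^{1+d}$ satisfy the Brownian-like scaling assumption described in the context. Then for every multi-index $\alpha\in\mathcal{A}$, $$\mathbb{E}\big[\|I^\gamma_\alpha(1)\|^2\big]=O\big(h^{2\,\mathrm{ord}(\alpha)}\big).$$
   Context: Brownian-like scaling assumption: $\gamma$ depends on the step size $h>0$; it is a continuous piecewise linear path with a fixed number $m\in\mathbb{N}$ of linear pieces, vertices $0=r_0<\dots<r_m=1$, and almost surely finite length; writing $\gamma_{r_i,r_{i+1}}=\gamma(r_{i+1})-\gamma(r_i)$, (1) the increments $\gamma^\tau_{r_i,r_{i+1}}$ are deterministic; (2) $\gamma^\tau_{r_i,r_{i+1}}=O(h)$ and for every $j\in\{1,\dots,d\}$ and $k\in\mathbb{N}$, $\mathbb{E}[|(\gamma^\omega_{r_i,r_{i+1}})_j|^{2k}]=O(h^k)$. $O(h^q)$ means bounded by a constant independent of $h$ times $h^q$ for all sufficiently small $h$. Multi-indices: $\mathcal{A}=\bigcup_{n\ge0}\{\tau,\omega\}^n$; for $\alpha=(\alpha_1,\dots,\alpha_n)$, $|\alpha|_\tau$ and $|\alpha|_\omega$ are the numbers of entries equal to $\tau$ and $\omega$, and $\mathrm{ord}(\alpha)=|\alpha|_\tau+\tfrac12|\alpha|_\omega$. The iterated integral $I^\gamma_\alpha(1)\in(\mathbb{R}^d)^{\otimes|\alpha|_\omega}$ is $$I^\gamma_\alpha(1)=\int_0^1\int_0^{r_1}\cdots\int_0^{r_{n-1}}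 d\gamma^{\alpha_1}(r_n)\,d\gamma^{\alpha_2}(r_{n-1})\cdots d\gamma^{\alpha_n}(r_1),$$ where a $\tau$-entry contributes the scalar differential $d\gamma^\tau$ and an $\omega$-entry contributes a tensor factor $d\gamma^\omega\in\mathbb{R}^d$ (the tensor factors taken in the order of the entries); integrals are Riemann–Stieltjes; $I^\gamma_{\emptyset}(1)=1$. *)

theory Defs
  imports "HOL-Probability.Probability"
begin

datatype letter = Tau | Omega

definition count_tau :: "letter list \<Rightarrow> nat" where
  "count_tau \<alpha> = length (filter (\<lambda>a. a = Tau) \<alpha>)"

definition count_omega :: "letter list \<Rightarrow> nat" where
  "count_omega \<alpha> = length (filter (\<lambda>a. a = Omega) \<alpha>)"

text \<open>Scalar coordinate of the path (gt, gw): None is the time coordinate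
  \<gamma>^\<tau>, Some j is the j-th coordinate of \<gamma>^\<omega>.\<close>
definition coord :: "(real \<Rightarrow> real) \<Rightarrow> (real \<Rightarrow> real^'d) \<Rightarrow> 'd option \<Rightarrow> real \<Rightarrow> real" where
  "coord gt gw c s = (case c of None \<Rightarrow> gt s | Some j \<Rightarrow> gw s $ j)"

text \<open>Riemann--Stieltjes integral of f against the (piecewise linear, hence
  a.e. differentiable) integrator g over [0,t], written as \<integral> f g'.\<close>
definition rs_integral :: "(real \<Rightarrow> real) \<Rightarrow> (real \<Rightarrow> real) \<Rightarrow> real \<Rightarrow> real" where
  "rs_integral f g t = integral {0..t} (\<lambda>s. f s * vector_derivative g (at s))"

text \<open>Scalar iterated integral; the word is given REVERSED (outermost letter
  first): iint [c_n,...,c_1] t = \<integral>_0^t iint [c_{n-1},...,c_1] s d\<gamma>^{c_n}(s).\<close>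
fun iint :: "(real \<Rightarrow> real) \<Rightarrow> (real \<Rightarrow> real^'d) \<Rightarrow> 'd option list \<Rightarrow> real \<Rightarrow> real" where
  "iint gt gw [] t = 1"
| "iint gt gw (c # cs) t = rs_integral (\<lambda>s. iint gt gw cs s) (coord gt gw c) t"

fun merge_word :: "letter list \<Rightarrow> 'd list \<Rightarrow> 'd option list" where
  "merge_word [] js = []"
| "merge_word (Tau # a) js = None # merge_word a js"
| "merge_word (Omega # a) (j # js) = Some j # merge_word a js"
| "merge_word (Omega # a) [] = []"

text \<open>Component (j_1,...,j_k) of the tensor I_\<alpha>(1) in (R^d)^{\<otimes>k}.\<close>
definition iterated_integral_comp ::
  "(real \<Rightarrow> real) \<Rightarrow> (real \<Rightarrow> real^'d) \<Rightarrow> letter list \<Rightarrow> 'd list \<Rightarrow> real" where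
  "iterated_integral_comp gt gw \<alpha> js = iint gt gw (rev (merge_word \<alpha> js)) 1"

text \<open>Squared (Euclidean / Hilbert--Schmidt) norm of the tensor I_\<alpha>(1).\<close>
definition iterated_integral_norm2 ::
  "(real \<Rightarrow> real) \<Rightarrow> (real \<Rightarrow> real^'d::finite) \<Rightarrow> letter list \<Rightarrow> real" where
  "iterated_integral_norm2 gt gw \<alpha> =
     (\<Sum>js\<in>{js :: 'd list. length js = count_omega \<alpha>}. (iterated_integral_comp gt gw \<alpha> js)\<^sup>2)"

end

theory Submission
  imports Defs
begin

lemma r_mono:
  fixes r :: "nat \<Rightarrow> real"
  assumes inc: "\<forall>i<m. r i < r (Suc i)"
  shows "i \<le> k \<Longrightarrow> k \<le> m \<Longrightarrow> r i \<le> r k"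
proof (induction k)
  case 0 then show ?case by simp
next
  case (Suc k)
  then show ?case using inc by (metis le_Suc_eq less_eq_Suc_le order.trans order_less_imp_le order_refl)
qed

lemma r_locate:
  fixes r :: "nat \<Rightarrow> real"
  assumes inc: "\<forall>i<m. r i < r (Suc i)" and r0: "r 0 = 0" and rm: "r m = 1"
    and s: "0 < s" "s < 1" "s \<notin> r ` {..m}"
  shows "\<exists>i<m. r i < s \<and> s < r (Suc i)"
proof -
  define A where "A = {i. i \<le> m \<and> r i < s}"
  have fin: "finite A" "0 \<in> A" unfolding A_def using r0 s by auto
  define i where "i = Max A"
  have iA: "i \<in> A" using fin unfolding i_def by (intro Max_in) auto
  have "i \<noteq> m" using iA rm s unfolding A_def by auto
  hence im: "i < m" using iA unfolding A_def by auto
  have "Suc i \<notin> A" using fin unfolding i_def by (metis Max_ge Suc_n_not_le_n)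
  hence "r (Suc i) \<ge> s" using im unfolding A_def by auto
  moreover have "r (Suc i) \<noteq> s" using s(3) im by force
  ultimately show ?thesis using iA im unfolding A_def by force
qed

lemma piece_deriv:
  fixes r :: "nat \<Rightarrow> real" and g :: "real \<Rightarrow> real"
  assumes lin: "\<And>s. s \<in> {r i..r (Suc i)} \<Longrightarrow>
          g s = g (r i) + (s - r i) / (r (Suc i) - r i) * (g (r (Suc i)) - g (r i))"
    and s: "r i < s" "s < r (Suc i)"
  shows "vector_derivative g (at s) = (g (r (Suc i)) - g (r i)) / (r (Suc i) - r i)"
proof -
  define c where "c = (g (r (Suc i)) - g (r i)) / (r (Suc i) - r i)"
  define L where "L = (\<lambda>y. g (r i) + (y - r i) * c)"
  have "(L has_real_derivative c) (at s)"
    unfolding L_def by (auto intro!: derivative_eq_intros)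
  hence "(L has_vector_derivative c) (at s)"
    by (simp add: has_real_derivative_iff_has_vector_derivative)
  hence "(g has_vector_derivative c) (at s)"
    by (rule has_vector_derivative_transform_within_open[where S="{r i<..<r (Suc i)}"])
       (use s in \<open>auto simp: L_def c_def\<close>, subst lin, auto)
  hence "vector_derivative g (at s) = c" by (rule vector_derivative_at)
  thus ?thesis by (simp add: c_def)
qed


lemma piece_bound:
  fixes r :: "nat \<Rightarrow> real" and g :: "real \<Rightarrow> real" and F :: "real \<Rightarrow> real"
  assumes r0: "r 0 = 0" and rm: "r m = 1" and inc: "\<forall>i<m. r i < r (Suc i)"
    and lin: "\<And>i s. i < m \<Longrightarrow> s \<in> {r i..r (Suc i)} \<Longrightarrow>
          g s = g (r i) + (s - r i) / (r (Suc i) - r i) * (g (r (Suc i)) - g (r i))"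
    and Fb: "\<And>s. s \<in> {0..1} \<Longrightarrow> \<bar>F s\<bar> \<le> B" and B: "B \<ge> 0" and t: "t \<le> 1"
  shows "\<bar>integral {0..t} (\<lambda>s. F s * vector_derivative g (at s))\<bar>
           \<le> B * (\<Sum>i<m. \<bar>g (r (Suc i)) - g (r i)\<bar>)"
proof (cases "t < 0")
  case True
  then show ?thesis using B by (simp add: sum_nonneg)
next
  case False
  hence t0: "0 \<le> t" by simp
  define D where "D = (\<lambda>i. \<bar>g (r (Suc i)) - g (r i)\<bar> / (r (Suc i) - r i))"
  have D0: "D i \<ge> 0" if "i < m" for i unfolding D_def using inc that
    by (auto intro!: divide_nonneg_nonneg)
  define H where "H = (\<lambda>i s. if s \<in> {r i..r (Suc i)} then B * D i else 0)"
  define G where "G = (\<lambda>s. \<Sum>i<m. H i s)"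
  define E where "E = r ` {..m} \<union> {0, 1}"
  define F' where "F' = (\<lambda>s. if s \<in> E then 0 else F s * vector_derivative g (at s))"
  have finE: "finite E" unfolding E_def by auto
  have H0: "H i s \<ge> 0" if "i < m" for i s unfolding H_def using B D0[OF that] by auto
  have G0: "G s \<ge> 0" for s unfolding G_def by (rule sum_nonneg) (use H0 in auto)
  have Hint: "H i integrable_on {0..u}" for i u
  proof -
    have "(\<lambda>s. B * D i) integrable_on ({r i..r (Suc i)} \<inter> {0..u})"
      unfolding Int_atLeastAtMost by (rule integrable_const_ivl)
    thus ?thesis unfolding H_def by (subst integrable_restrict_Int)
  qed
  have Gint: "G integrable_on {0..u}" for u unfolding G_def
    by (rule integrable_sum) (auto intro: Hint)
  have rle: "0 \<le> r i \<and> r i \<le> 1" if "i \<le> m" for i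
    using r_mono[OF inc, of 0 i] r_mono[OF inc, of i m] that r0 rm by auto
  have Hval: "integral {0..1} (H i) = B * \<bar>g (r (Suc i)) - g (r i)\<bar>" if "i < m" for i
  proof -
    have sub: "{r i..r (Suc i)} \<inter> {0..1} = {r i..r (Suc i)}"
      using rle[of i] rle[of "Suc i"] that by auto
    have "integral {0..1} (H i) = integral {r i..r (Suc i)} (\<lambda>s. B * D i)"
      unfolding H_def by (subst integral_restrict_Int, subst sub, rule refl)
    also have "\<dots> = (r (Suc i) - r i) * (B * D i)"
      using inc that by (simp add: less_imp_le)
    also have "\<dots> = B * \<bar>g (r (Suc i)) - g (r i)\<bar>"
    proof -
      have "r (Suc i) - r i \<noteq> 0" using inc that by auto
      thus ?thesis unfolding D_def by simp
    qed
    finally show ?thesis .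
  qed
  have eq: "integral {0..t} (\<lambda>s. F s * vector_derivative g (at s)) = integral {0..t} F'"
    by (rule integral_spike[OF negligible_finite[OF finE]]) (auto simp: F'_def)
  have bound: "\<bar>F' s\<bar> \<le> G s" if s: "s \<in> {0..t}" for s
  proof (cases "s \<in> E")
    case True
    then show ?thesis unfolding F'_def using G0 by simp
  next
    case False
    hence s01: "0 < s" "s < 1" "s \<notin> r ` {..m}" using s t unfolding E_def by auto
    obtain i where i: "i < m" "r i < s" "s < r (Suc i)"
      using r_locate[OF inc r0 rm s01] by blast
    have vd: "vector_derivative g (at s) = (g (r (Suc i)) - g (r i)) / (r (Suc i) - r i)"
      by (rule piece_deriv[OF _ i(2,3)]) (rule lin[OF i(1)])
    have "\<bar>F' s\<bar> = \<bar>F s\<bar> * D i"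
      using False vd inc i unfolding F'_def D_def by (simp add: abs_mult)
    also have "\<dots> \<le> B * D i" using Fb[of s] s01 D0[OF i(1)] by (intro mult_right_mono) auto
    also have "\<dots> = H i s" unfolding H_def using i by auto
    also have "\<dots> \<le> G s" unfolding G_def
      by (rule member_le_sum) (use i H0 in auto)
    finally show ?thesis .
  qed
  have "\<bar>integral {0..t} F'\<bar> \<le> integral {0..t} G"
  proof (cases "F' integrable_on {0..t}")
    case True
    have "norm (integral {0..t} F') \<le> integral {0..t} G"
      by (rule integral_norm_bound_integral[OF True Gint]) (use bound in simp)
    thus ?thesis by simp
  next
    case False
    hence "integral {0..t} F' = 0" by (rule not_integrable_integral)
    moreover have "integral {0..t} G \<ge> 0"
      by (rule integral_nonneg[OF Gint]) (simp add: G0)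
    ultimately show ?thesis by simp
  qed
  also have "\<dots> \<le> integral {0..1} G"
    by (rule integral_subset_le) (use t Gint G0 in auto)
  also have "\<dots> = (\<Sum>i<m. integral {0..1} (H i))"
    unfolding G_def by (rule integral_sum) (auto intro: Hint)
  also have "\<dots> = B * (\<Sum>i<m. \<bar>g (r (Suc i)) - g (r i)\<bar>)"
    by (simp add: Hval sum_distrib_left)
  finally show ?thesis using eq by simp
qed


lemma meas_comp:
  fixes F :: "'a \<Rightarrow> real^'d::finite"
  assumes "F \<in> borel_measurable M" "G \<in> borel_measurable M"
  shows "(\<lambda>x. \<bar>(F x - G x) $ j\<bar> ^ k) \<in> borel_measurable M"
proof -
  have c: "(\<lambda>v::real^'d. \<bar>v $ j\<bar> ^ k) \<in> borel_measurable borel"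
    by (intro borel_measurable_continuous_onI continuous_intros)
  have "(\<lambda>x. F x - G x) \<in> borel_measurable M" using assms by measurable
  from measurable_compose[OF this c] show ?thesis by simp
qed

lemma iint_bound:
  fixes r :: "nat \<Rightarrow> real" and gt :: "real \<Rightarrow> real" and gw :: "real \<Rightarrow> real^'d"
  assumes r0: "r 0 = 0" and rm: "r m = 1" and inc: "\<forall>i<m. r i < r (Suc i)"
    and lt: "\<And>i s. i < m \<Longrightarrow> s \<in> {r i..r (Suc i)} \<Longrightarrow>
          gt s = gt (r i) + (s - r i) / (r (Suc i) - r i) * (gt (r (Suc i)) - gt (r i))"
    and lw: "\<And>i s. i < m \<Longrightarrow> s \<in> {r i..r (Suc i)} \<Longrightarrow>
          gw s = gw (r i) + ((s - r i) / (r (Suc i) - r i)) *\<^sub>R (gw (r (Suc i)) - gw (r i))"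
  shows "t \<le> 1 \<Longrightarrow> \<bar>iint gt gw cs t\<bar> \<le>
     prod_list (map (\<lambda>c. \<Sum>i<m. \<bar>coord gt gw c (r (Suc i)) - coord gt gw c (r i)\<bar>) cs)"
proof (induction cs arbitrary: t)
  case Nil
  then show ?case by simp
next
  case (Cons c cs)
  define V where "V = (\<lambda>c. \<Sum>i<m. \<bar>coord gt gw c (r (Suc i)) - coord gt gw c (r i)\<bar>)"
  have V0: "V c \<ge> 0" for c unfolding V_def by (rule sum_nonneg) auto
  have B0: "prod_list (map V cs) \<ge> 0" by (induction cs) (auto simp: V0)
  have lc: "coord gt gw c s = coord gt gw c (r i) + (s - r i) / (r (Suc i) - r i) *
        (coord gt gw c (r (Suc i)) - coord gt gw c (r i))"
    if "i < m" "s \<in> {r i..r (Suc i)}" for i s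
  proof (cases c)
    case None
    then show ?thesis using lt[OF that] by (simp add: coord_def)
  next
    case (Some j)
    have "gw s $ j = (gw (r i) + ((s - r i) / (r (Suc i) - r i)) *\<^sub>R (gw (r (Suc i)) - gw (r i))) $ j"
      using lw[OF that] by simp
    then show ?thesis using Some by (simp add: coord_def)
  qed
  have "\<bar>integral {0..t} (\<lambda>s. iint gt gw cs s * vector_derivative (coord gt gw c) (at s))\<bar>
        \<le> prod_list (map V cs) * V c"
    unfolding V_def
    by (rule piece_bound[OF r0 rm inc lc]) (use Cons B0 in \<open>auto simp: V_def\<close>)
  then show ?case by (simp add: rs_integral_def V_def[symmetric] mult.commute)
qed

lemma prod_merge:
  fixes V :: "'d option \<Rightarrow> real"
  shows "length js = count_omega \<alpha> \<Longrightarrow>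
   prod_list (map V (merge_word \<alpha> js)) = V None ^ count_tau \<alpha> * prod_list (map (\<lambda>j. V (Some j)) js)"
  by (induction \<alpha> js rule: merge_word.induct) (auto simp: count_tau_def count_omega_def mult_ac)

lemma prod_list_le_pow:
  fixes f :: "'b \<Rightarrow> real"
  assumes "\<And>j. 0 \<le> f j" "\<And>j. f j \<le> W"
  shows "prod_list (map f js) \<le> W ^ length js"
  by (induction js) (auto intro!: mult_mono assms order.trans[OF assms(1) assms(2)] prod_list_nonneg)

lemma sum_pow_le:
  fixes a :: "'b \<Rightarrow> real"
  assumes "finite K" "K \<noteq> {}" "\<And>k. k \<in> K \<Longrightarrow> 0 \<le> a k"
  shows "(\<Sum>k\<in>K. a k) ^ p \<le> real (card K) ^ p * (\<Sum>k\<in>K. a k ^ p)"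
proof -
  define Mx where "Mx = Max (a ` K)"
  have MxK: "Mx \<in> a ` K" unfolding Mx_def using assms by (intro Max_in) auto
  then obtain k0 where k0: "k0 \<in> K" "Mx = a k0" by auto
  have "(\<Sum>k\<in>K. a k) \<le> real (card K) * Mx"
    using sum_bounded_above[of K a Mx] assms unfolding Mx_def by auto
  hence "(\<Sum>k\<in>K. a k) ^ p \<le> (real (card K) * Mx) ^ p"
    by (intro power_mono) (auto intro: sum_nonneg assms)
  also have "\<dots> = real (card K) ^ p * a k0 ^ p" by (simp add: k0 power_mult_distrib)
  also have "\<dots> \<le> real (card K) ^ p * (\<Sum>k\<in>K. a k ^ p)"
    by (intro mult_left_mono member_le_sum) (use k0 assms in auto)
  finally show ?thesis .
qed



lemma prod_list_rev_real: "prod_list (rev xs) = prod_list (xs :: real list)"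
  by (induction xs) (auto simp: mult.commute)

theorem lemma3p4:
  fixes M :: "'a measure"
    and gt :: "real \<Rightarrow> 'a \<Rightarrow> real \<Rightarrow> real"
    and gw :: "real \<Rightarrow> 'a \<Rightarrow> real \<Rightarrow> real^'d::finite"
    and r :: "real \<Rightarrow> nat \<Rightarrow> real"
    and m :: nat
  assumes "prob_space M"
    and m_pos: "m \<ge> 1"
    and verts: "\<And>h. h > 0 \<Longrightarrow> r h 0 = 0 \<and> r h m = 1 \<and> (\<forall>i<m. r h i < r h (Suc i))"
    and lin_t: "\<And>h x i s. h > 0 \<Longrightarrow> x \<in> space M \<Longrightarrow> i < m \<Longrightarrow> s \<in> {r h i .. r h (Suc i)} \<Longrightarrow>
          gt h x s = gt h x (r h i) + (s - r h i) / (r h (Suc i) - r h i) * (gt h x (r h (Suc i)) - gt h x (r h i))"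
    and lin_w: "\<And>h x i s. h > 0 \<Longrightarrow> x \<in> space M \<Longrightarrow> i < m \<Longrightarrow> s \<in> {r h i .. r h (Suc i)} \<Longrightarrow>
          gw h x s = gw h x (r h i) + ((s - r h i) / (r h (Suc i) - r h i)) *\<^sub>R (gw h x (r h (Suc i)) - gw h x (r h i))"
    and meas_t: "\<And>h s. h > 0 \<Longrightarrow> s \<in> {0..1} \<Longrightarrow> (\<lambda>x. gt h x s) \<in> borel_measurable M"
    and meas_w: "\<And>h s. h > 0 \<Longrightarrow> s \<in> {0..1} \<Longrightarrow> (\<lambda>x. gw h x s) \<in> borel_measurable M"
    and det_t: "\<And>h x y i. h > 0 \<Longrightarrow> x \<in> space M \<Longrightarrow> y \<in> space M \<Longrightarrow> i < m \<Longrightarrow>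
          gt h x (r h (Suc i)) - gt h x (r h i) = gt h y (r h (Suc i)) - gt h y (r h i)"
    and scale_t: "\<And>i. i < m \<Longrightarrow> \<exists>C h0. h0 > 0 \<and> (\<forall>h x. 0 < h \<and> h < h0 \<and> x \<in> space M \<longrightarrow>
          \<bar>gt h x (r h (Suc i)) - gt h x (r h i)\<bar> \<le> C * h)"
    and scale_w: "\<And>i j k. i < m \<Longrightarrow> \<exists>C h0. h0 > 0 \<and> (\<forall>h. 0 < h \<and> h < h0 \<longrightarrow>
          (\<integral>\<^sup>+ x. ennreal (\<bar>(gw h x (r h (Suc i)) - gw h x (r h i)) $ j\<bar> ^ (2 * k)) \<partial>M)
            \<le> ennreal (C * h ^ k))"
  shows "\<forall>\<alpha> :: letter list. \<exists>C h0. h0 > 0 \<and> (\<forall>h. 0 < h \<and> h < h0 \<longrightarrow>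
          (\<integral>\<^sup>+ x. ennreal (iterated_integral_norm2 (gt h x) (gw h x) \<alpha>) \<partial>M)
            \<le> ennreal (C * h ^ (2 * count_tau \<alpha> + count_omega \<alpha>)))"
proof
  fix \<alpha> :: "letter list"
  define nt where "nt = count_tau \<alpha>"
  define n where "n = count_omega \<alpha>"
  define K where "K = (UNIV :: 'd set) \<times> {..<m}"
  have finK: "finite K" unfolding K_def by simp
  have nem: "{..<m} \<noteq> {}" using m_pos by (auto simp: lessThan_empty_iff)
  have neK: "K \<noteq> {}" unfolding K_def using nem by simp
  have rle: "0 \<le> r h i \<and> r h i \<le> 1" if "h > 0" "i \<le> m" for h i
    using r_mono[of m "r h" 0 i] r_mono[of m "r h" i m] verts[OF that(1)] that by auto
  have "\<forall>i. \<exists>C h0. i < m \<longrightarrow> h0 > 0 \<and> (\<forall>h x. 0 < h \<and> h < h0 \<and> x \<in> space M \<longrightarrow>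
          \<bar>gt h x (r h (Suc i)) - gt h x (r h i)\<bar> \<le> C * h)"
  proof
    fix i show "\<exists>C h0. i < m \<longrightarrow> h0 > 0 \<and> (\<forall>h x. 0 < h \<and> h < h0 \<and> x \<in> space M \<longrightarrow>
          \<bar>gt h x (r h (Suc i)) - gt h x (r h i)\<bar> \<le> C * h)"
    proof (cases "i < m")
      case True
      from scale_t[OF True] show ?thesis by blast
    qed simp
  qed
  from choice[OF this] obtain Ct where Ct1: "\<forall>i. \<exists>h0. i < m \<longrightarrow> h0 > 0 \<and> (\<forall>h x. 0 < h \<and> h < h0 \<and> x \<in> space M \<longrightarrow>
          \<bar>gt h x (r h (Suc i)) - gt h x (r h i)\<bar> \<le> Ct i * h)" by (rule exE)
  from choice[OF Ct1] obtain ht where Ct2: "\<forall>i. i < m \<longrightarrow> ht i > 0 \<and> (\<forall>h x. 0 < h \<and> h < ht i \<and> x \<in> space M \<longrightarrow>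
          \<bar>gt h x (r h (Suc i)) - gt h x (r h i)\<bar> \<le> Ct i * h)" by (rule exE)
  have Ct: "\<And>i. i < m \<Longrightarrow> ht i > 0 \<and> (\<forall>h x. 0 < h \<and> h < ht i \<and> x \<in> space M \<longrightarrow>
          \<bar>gt h x (r h (Suc i)) - gt h x (r h i)\<bar> \<le> Ct i * h)"
    using Ct2 by (rule allE) (rule mp)
  have "\<forall>p. \<exists>C h0. p \<in> K \<longrightarrow> h0 > 0 \<and> (\<forall>h. 0 < h \<and> h < h0 \<longrightarrow>
          (\<integral>\<^sup>+ x. ennreal (\<bar>(gw h x (r h (Suc (snd p))) - gw h x (r h (snd p))) $ fst p\<bar> ^ (2 * n)) \<partial>M)
            \<le> ennreal (C * h ^ n))"
  proof
    fix p show "\<exists>C h0. p \<in> K \<longrightarrow> h0 > 0 \<and> (\<forall>h. 0 < h \<and> h < h0 \<longrightarrow>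
          (\<integral>\<^sup>+ x. ennreal (\<bar>(gw h x (r h (Suc (snd p))) - gw h x (r h (snd p))) $ fst p\<bar> ^ (2 * n)) \<partial>M)
            \<le> ennreal (C * h ^ n))"
    proof (cases "p \<in> K")
      case True
      hence "snd p < m" unfolding K_def by (cases p) simp
      from scale_w[OF this, of "fst p" n] show ?thesis by blast
    qed simp
  qed
  from choice[OF this] obtain Cw where Cw1: "\<forall>p. \<exists>h0. p \<in> K \<longrightarrow> h0 > 0 \<and> (\<forall>h. 0 < h \<and> h < h0 \<longrightarrow>
          (\<integral>\<^sup>+ x. ennreal (\<bar>(gw h x (r h (Suc (snd p))) - gw h x (r h (snd p))) $ fst p\<bar> ^ (2 * n)) \<partial>M)
            \<le> ennreal (Cw p * h ^ n))" by (rule exE)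
  from choice[OF Cw1] obtain hw where Cw2: "\<forall>p. p \<in> K \<longrightarrow> hw p > 0 \<and> (\<forall>h. 0 < h \<and> h < hw p \<longrightarrow>
          (\<integral>\<^sup>+ x. ennreal (\<bar>(gw h x (r h (Suc (snd p))) - gw h x (r h (snd p))) $ fst p\<bar> ^ (2 * n)) \<partial>M)
            \<le> ennreal (Cw p * h ^ n))" by (rule exE)
  have Cw: "\<And>p. p \<in> K \<Longrightarrow> hw p > 0 \<and> (\<forall>h. 0 < h \<and> h < hw p \<longrightarrow>
          (\<integral>\<^sup>+ x. ennreal (\<bar>(gw h x (r h (Suc (snd p))) - gw h x (r h (snd p))) $ fst p\<bar> ^ (2 * n)) \<partial>M)
            \<le> ennreal (Cw p * h ^ n))"
    using Cw2 by (rule allE) (rule mp)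
  define h0 where "h0 = min (Min (ht ` {..<m})) (Min (hw ` K))"
  have h0pos: "h0 > 0" unfolding h0_def using Ct Cw finK neK nem
    by (auto simp: Min_gr_iff)
  have h0t: "h0 \<le> ht i" if "i < m" for i unfolding h0_def using that by (auto intro: min.coboundedI1)
  have h0w: "h0 \<le> hw p" if "p \<in> K" for p unfolding h0_def using that finK by (auto intro: min.coboundedI2)
  define CT where "CT = (\<Sum>i<m. max 0 (Ct i))"
  define Cs where "Cs = (\<Sum>p\<in>K. max 0 (Cw p))"
  define JS where "JS = {js :: 'd list. length js = n}"
  have finJS: "finite JS" unfolding JS_def using finite_lists_length_eq[of "UNIV :: 'd set" n] by simp
  define C where "C = real (card JS) * CT ^ (2 * nt) * real (card K) ^ (2 * n) * Cs"
  have CT0: "CT \<ge> 0" unfolding CT_def by (rule sum_nonneg) auto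
  have Cs0: "Cs \<ge> 0" unfolding Cs_def by (rule sum_nonneg) auto
  show "\<exists>C h0. h0 > 0 \<and> (\<forall>h. 0 < h \<and> h < h0 \<longrightarrow>
          (\<integral>\<^sup>+ x. ennreal (iterated_integral_norm2 (gt h x) (gw h x) \<alpha>) \<partial>M)
            \<le> ennreal (C * h ^ (2 * count_tau \<alpha> + count_omega \<alpha>)))"
  proof (intro exI conjI allI impI)
    show "h0 > 0" by (rule h0pos)
    fix h :: real assume h: "0 < h \<and> h < h0"
    hence hpos: "h > 0" by simp
    define a where "a = (\<lambda>x p. \<bar>(gw h x (r h (Suc (snd p))) - gw h x (r h (snd p))) $ fst p\<bar>)"
    define A where "A = real (card JS) * (CT * h) ^ (2 * nt) * real (card K) ^ (2 * n)"
    have A0: "A \<ge> 0" unfolding A_def using CT0 hpos by simp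
    have pw: "iterated_integral_norm2 (gt h x) (gw h x) \<alpha> \<le> A * (\<Sum>p\<in>K. a x p ^ (2 * n))"
      if x: "x \<in> space M" for x
    proof -
      define V where "V = (\<lambda>c. \<Sum>i<m. \<bar>coord (gt h x) (gw h x) c (r h (Suc i)) - coord (gt h x) (gw h x) c (r h i)\<bar>)"
      define W where "W = (\<Sum>p\<in>K. a x p)"
      have V0: "V c \<ge> 0" for c unfolding V_def by (rule sum_nonneg) auto
      have W0: "W \<ge> 0" unfolding W_def a_def by (rule sum_nonneg) auto
      have VT: "V None \<le> CT * h"
      proof -
        have "V None = (\<Sum>i<m. \<bar>gt h x (r h (Suc i)) - gt h x (r h i)\<bar>)"
          unfolding V_def coord_def by simp
        also have "\<dots> \<le> (\<Sum>i<m. max 0 (Ct i) * h)"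
        proof (rule sum_mono)
          fix i assume "i \<in> {..<m}"
          hence i: "i < m" by simp
          have "\<bar>gt h x (r h (Suc i)) - gt h x (r h i)\<bar> \<le> Ct i * h"
            using Ct[OF i] h h0t[OF i] x by auto
          also have "\<dots> \<le> max 0 (Ct i) * h" using hpos by (intro mult_right_mono) auto
          finally show "\<bar>gt h x (r h (Suc i)) - gt h x (r h i)\<bar> \<le> max 0 (Ct i) * h" .
        qed
        also have "\<dots> = CT * h" unfolding CT_def by (simp add: sum_distrib_right)
        finally show ?thesis .
      qed
      have VW: "V (Some j) \<le> W" for j
      proof -
        have "V (Some j) = (\<Sum>i<m. a x (j, i))" unfolding V_def a_def coord_def by simp
        also have "\<dots> \<le> (\<Sum>j'\<in>UNIV. \<Sum>i<m. a x (j', i))"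
          by (rule member_le_sum) (auto intro: sum_nonneg simp: a_def)
        also have "\<dots> = W" unfolding W_def K_def by (simp add: sum.cartesian_product)
        finally show ?thesis .
      qed
      have comp: "(iterated_integral_comp (gt h x) (gw h x) \<alpha> js)\<^sup>2 \<le> (CT * h) ^ (2 * nt) * W ^ (2 * n)"
        if js: "js \<in> JS" for js
      proof -
        have "\<bar>iterated_integral_comp (gt h x) (gw h x) \<alpha> js\<bar>
              \<le> prod_list (map V (rev (merge_word \<alpha> js)))"
          unfolding iterated_integral_comp_def V_def
          by (rule iint_bound[of "r h" m])
             (use verts[OF hpos] in blast, use verts[OF hpos] in blast, use verts[OF hpos] in blast,
              (rule lin_t[OF hpos x], assumption+), (rule lin_w[OF hpos x], assumption+), simp)
        also have "\<dots> = V None ^ nt * prod_list (map (\<lambda>j. V (Some j)) js)"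
          using js prod_merge[of js \<alpha> V] unfolding JS_def n_def nt_def
          by (simp add: rev_map[symmetric] prod_list_rev_real)
        also have "\<dots> \<le> (CT * h) ^ nt * W ^ n"
        proof (rule mult_mono)
          show "V None ^ nt \<le> (CT * h) ^ nt" by (rule power_mono[OF VT V0])
          show "prod_list (map (\<lambda>j. V (Some j)) js) \<le> W ^ n"
            using prod_list_le_pow[of "\<lambda>j. V (Some j)" W js] V0 VW js unfolding JS_def by simp
          show "0 \<le> (CT * h) ^ nt" using CT0 hpos by simp
          show "0 \<le> prod_list (map (\<lambda>j. V (Some j)) js)" by (rule prod_list_nonneg) (auto simp: V0)
        qed
        finally have "\<bar>iterated_integral_comp (gt h x) (gw h x) \<alpha> js\<bar> \<le> (CT * h) ^ nt * W ^ n" .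
        hence "\<bar>iterated_integral_comp (gt h x) (gw h x) \<alpha> js\<bar> ^ 2 \<le> ((CT * h) ^ nt * W ^ n) ^ 2"
          by (intro power_mono) auto
        thus ?thesis by (simp add: power_mult_distrib power_mult[symmetric] mult.commute)
      qed
      have "iterated_integral_norm2 (gt h x) (gw h x) \<alpha>
            = (\<Sum>js\<in>JS. (iterated_integral_comp (gt h x) (gw h x) \<alpha> js)\<^sup>2)"
        unfolding iterated_integral_norm2_def JS_def n_def by simp
      also have "\<dots> \<le> real (card JS) * ((CT * h) ^ (2 * nt) * W ^ (2 * n))"
        using sum_bounded_above[of JS _ "(CT * h) ^ (2 * nt) * W ^ (2 * n)"] comp by auto
      also have "\<dots> \<le> real (card JS) * ((CT * h) ^ (2 * nt) * (real (card K) ^ (2 * n) * (\<Sum>p\<in>K. a x p ^ (2 * n))))"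
        unfolding W_def using CT0 hpos
        by (intro mult_left_mono sum_pow_le[OF finK neK]) (auto simp: a_def)
      also have "\<dots> = A * (\<Sum>p\<in>K. a x p ^ (2 * n))" unfolding A_def by (simp add: mult_ac)
      finally show ?thesis .
    qed
    have meas: "(\<lambda>x. ennreal (a x p ^ (2 * n))) \<in> borel_measurable M" if "p \<in> K" for p
    proof -
      have sm: "snd p < m" using that unfolding K_def by (cases p) simp
      have "(\<lambda>x. \<bar>(gw h x (r h (Suc (snd p))) - gw h x (r h (snd p))) $ fst p\<bar> ^ (2 * n)) \<in> borel_measurable M"
        using rle[OF hpos, of "snd p"] rle[OF hpos, of "Suc (snd p)"] sm
        by (intro meas_comp meas_w[OF hpos]) auto
      thus ?thesis unfolding a_def by measurable
    qed
    have "(\<integral>\<^sup>+ x. ennreal (iterated_integral_norm2 (gt h x) (gw h x) \<alpha>) \<partial>M)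
          \<le> (\<integral>\<^sup>+ x. ennreal A * (\<Sum>p\<in>K. ennreal (a x p ^ (2 * n))) \<partial>M)"
    proof (rule nn_integral_mono)
      fix x assume x: "x \<in> space M"
      have "ennreal (iterated_integral_norm2 (gt h x) (gw h x) \<alpha>) \<le> ennreal (A * (\<Sum>p\<in>K. a x p ^ (2 * n)))"
        by (rule ennreal_leI[OF pw[OF x]])
      also have "\<dots> = ennreal A * (\<Sum>p\<in>K. ennreal (a x p ^ (2 * n)))"
        using A0 by (simp add: ennreal_mult a_def sum_nonneg)
      finally show "ennreal (iterated_integral_norm2 (gt h x) (gw h x) \<alpha>) \<le> ennreal A * (\<Sum>p\<in>K. ennreal (a x p ^ (2 * n)))" .
    qed
    also have "\<dots> = ennreal A * (\<Sum>p\<in>K. \<integral>\<^sup>+ x. ennreal (a x p ^ (2 * n)) \<partial>M)"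
    proof -
      have ms: "(\<lambda>x. \<Sum>p\<in>K. ennreal (a x p ^ (2 * n))) \<in> borel_measurable M"
        by (rule borel_measurable_sum) (rule meas)
      have "(\<integral>\<^sup>+ x. ennreal A * (\<Sum>p\<in>K. ennreal (a x p ^ (2 * n))) \<partial>M)
            = ennreal A * (\<integral>\<^sup>+ x. (\<Sum>p\<in>K. ennreal (a x p ^ (2 * n))) \<partial>M)"
        by (rule nn_integral_cmult[OF ms])
      also have "(\<integral>\<^sup>+ x. (\<Sum>p\<in>K. ennreal (a x p ^ (2 * n))) \<partial>M)
            = (\<Sum>p\<in>K. \<integral>\<^sup>+ x. ennreal (a x p ^ (2 * n)) \<partial>M)"
        by (rule nn_integral_sum) (rule meas)
      finally show ?thesis .
    qed
    also have "\<dots> \<le> ennreal A * (\<Sum>p\<in>K. ennreal (max 0 (Cw p) * h ^ n))"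
    proof (intro mult_left_mono sum_mono)
      fix p assume p: "p \<in> K"
      have "(\<integral>\<^sup>+ x. ennreal (a x p ^ (2 * n)) \<partial>M) \<le> ennreal (Cw p * h ^ n)"
        using Cw[OF p] h h0w[OF p] unfolding a_def by auto
      also have "\<dots> \<le> ennreal (max 0 (Cw p) * h ^ n)"
        using hpos by (intro ennreal_leI mult_right_mono) auto
      finally show "(\<integral>\<^sup>+ x. ennreal (a x p ^ (2 * n)) \<partial>M) \<le> ennreal (max 0 (Cw p) * h ^ n)" .
    qed auto
    also have "\<dots> = ennreal (A * (Cs * h ^ n))"
    proof -
      have nn: "\<And>p. p \<in> K \<Longrightarrow> 0 \<le> max 0 (Cw p) * h ^ n" using hpos by simp
      have "(\<Sum>p\<in>K. ennreal (max 0 (Cw p) * h ^ n)) = ennreal (\<Sum>p\<in>K. max 0 (Cw p) * h ^ n)"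
        by (rule sum_ennreal[OF nn])
      also have "(\<Sum>p\<in>K. max 0 (Cw p) * h ^ n) = Cs * h ^ n"
        unfolding Cs_def by (rule sum_distrib_right[symmetric])
      finally show ?thesis using A0 Cs0 hpos by (simp add: ennreal_mult)
    qed
    also have "A * (Cs * h ^ n) = C * h ^ (2 * count_tau \<alpha> + count_omega \<alpha>)"
      unfolding A_def C_def nt_def n_def by (simp add: power_add power_mult_distrib mult_ac)
    finally show "(\<integral>\<^sup>+ x. ennreal (iterated_integral_norm2 (gt h x) (gw h x) \<alpha>) \<partial>M)
            \<le> ennreal (C * h ^ (2 * count_tau \<alpha> + count_omega \<alpha>))" .
  qed
qed

end
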